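(* Let $R$ be a DT ring. Then: (1) $er-re\in\Delta(R)$ for every idempotent $e\in R$ and every $r\in R$; (2) $fd+df\in\Delta(R)$ and $fd-df\in\Delta(R)$ for every $f\in\mathrm{Tr}(R)$ and every $d\in\Delta(R)$.
   Context: All rings are associative with identity; $U(R)$ is the group of units. $\Delta(R)=\{x\in R: x+u\in U(R)\text{ for all }u\in U(R)\}$. $\mathrm{Tr}(R)=\{x\in R: x^3=x\}$. A ring $R$ is a DT ring if every $r\in R$ can be written $r=e+d$ with $e\in\mathrm{Tr}(R)$ and $d\in\Delta(R)$. *)

theory Defs
  imports Main
begin

definition units_of_ring :: "'a::ring_1 set" where
  "units_of_ring = {u. \<exists>v. u * v = 1 \<and> v * u = 1}"

definition Delta :: "'a::ring_1 set" where
  "Delta = {x. \<forall>u \<in> units_of_ring. x + u \<in> units_of_ring}"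

definition Tr :: "'a::ring_1 set" where
  "Tr = {x. x ^ 3 = x}"

definition DT_ring :: "'a::ring_1 itself \<Rightarrow> bool" where
  "DT_ring _ = (\<forall>r::'a. \<exists>e d. r = e + d \<and> e \<in> Tr \<and> d \<in> Delta)"

end

theory Submission
  imports Defs
begin

lemma U_mult: "u \<in> units_of_ring \<Longrightarrow> v \<in> units_of_ring \<Longrightarrow> (u * v :: 'a::ring_1) \<in> units_of_ring"
proof -
  assume "u \<in> units_of_ring" "v \<in> units_of_ring"
  then obtain u' v' where "u * u' = 1" "u' * u = 1" "v * v' = 1" "v' * v = 1"
    by (auto simp: units_of_ring_def)
  moreover have "(u * v) * (v' * u') = u * ((v * v') * u')" "(v' * u') * (u * v) = v' * ((u' * u) * v)"
    by (simp_all only: mult.assoc)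
  ultimately have "(u * v) * (v' * u') = 1" "(v' * u') * (u * v) = 1" by simp_all
  then show ?thesis by (auto simp: units_of_ring_def)
qed

lemma U_inv: "u \<in> units_of_ring \<Longrightarrow> \<exists>v \<in> units_of_ring. (u::'a::ring_1) * v = 1 \<and> v * u = 1"
  by (auto simp: units_of_ring_def)

lemma U_neg: "u \<in> units_of_ring \<Longrightarrow> (- u :: 'a::ring_1) \<in> units_of_ring"
proof -
  assume "u \<in> units_of_ring"
  then obtain v where "u * v = 1" "v * u = 1" by (auto simp: units_of_ring_def)
  then have "(- u) * (- v) = 1" "(- v) * (- u) = 1" by simp_all
  then show ?thesis unfolding units_of_ring_def by blast
qed

lemma D_add: "x \<in> Delta \<Longrightarrow> y \<in> Delta \<Longrightarrow> (x + y :: 'a::ring_1) \<in> Delta"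
  unfolding Delta_def by (simp add: add.assoc)

lemma D_neg: "x \<in> Delta \<Longrightarrow> (- x :: 'a::ring_1) \<in> Delta"
proof -
  assume x: "x \<in> Delta"
  { fix u :: 'a assume "u \<in> units_of_ring"
    then have "- u \<in> units_of_ring" by (rule U_neg)
    then have "x + - u \<in> units_of_ring" using x unfolding Delta_def by blast
    then have "- (x + - u) \<in> units_of_ring" by (rule U_neg)
    then have "- x + u \<in> units_of_ring" by simp }
  then show ?thesis by (simp add: Delta_def)
qed

lemma D_diff: "x \<in> Delta \<Longrightarrow> y \<in> Delta \<Longrightarrow> (x - y :: 'a::ring_1) \<in> Delta"
proof -
  assume "x \<in> Delta" "y \<in> Delta"
  then have "x + - y \<in> Delta" by (intro D_add D_neg)
  then show ?thesis by (simp only: diff_conv_add_uminus)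
qed

lemma D_lmult: "u \<in> units_of_ring \<Longrightarrow> x \<in> Delta \<Longrightarrow> (u * x :: 'a::ring_1) \<in> Delta"
proof -
  assume u: "u \<in> units_of_ring" and x: "x \<in> Delta"
  obtain u' where u': "u' \<in> units_of_ring" "u * u' = 1" "u' * u = 1" using U_inv[OF u] by blast
  { fix v :: 'a assume v: "v \<in> units_of_ring"
    have "x + u' * v \<in> units_of_ring" using x U_mult[OF u' (1) v] by (auto simp: Delta_def)
    then have "u * (x + u' * v) \<in> units_of_ring" using U_mult u by blast
    also have "u * (x + u' * v) = u * x + v" using u' by (simp add: distrib_left mult.assoc[symmetric])
    finally have "u * x + v \<in> units_of_ring" . }
  then show ?thesis by (simp add: Delta_def)
qed

lemma D_rmult: "u \<in> units_of_ring \<Longrightarrow> x \<in> Delta \<Longrightarrow> (x * u :: 'a::ring_1) \<in> Delta"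
proof -
  assume u: "u \<in> units_of_ring" and x: "x \<in> Delta"
  obtain u' where u': "u' \<in> units_of_ring" "u * u' = 1" "u' * u = 1" using U_inv[OF u] by blast
  { fix v :: 'a assume v: "v \<in> units_of_ring"
    have "x + v * u' \<in> units_of_ring" using x U_mult[OF v u' (1)] by (auto simp: Delta_def)
    then have "(x + v * u') * u \<in> units_of_ring" using U_mult u by blast
    also have "(x + v * u') * u = x * u + v" using u' by (simp add: distrib_right mult.assoc)
    finally have "x * u + v \<in> units_of_ring" . }
  then show ?thesis by (simp add: Delta_def)
qed

lemma one_plus_sq0: "a * a = 0 \<Longrightarrow> (1 + a :: 'a::ring_1) \<in> units_of_ring"
  unfolding units_of_ring_def
  by (rule CollectI, rule exI[of _ "1 - a"]) (simp add: algebra_simps)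

lemma D_one_plus: "x \<in> Delta \<Longrightarrow> (1 + x :: 'a::ring_1) \<in> units_of_ring"
proof -
  assume "x \<in> Delta"
  moreover have "(1::'a) \<in> units_of_ring" by (auto simp: units_of_ring_def)
  ultimately have "x + 1 \<in> units_of_ring" by (auto simp: Delta_def)
  then show ?thesis by (simp add: add.commute)
qed

lemma D_lmult_sq0: "a * a = 0 \<Longrightarrow> d \<in> Delta \<Longrightarrow> (a * d :: 'a::ring_1) \<in> Delta"
proof -
  assume a: "a * a = 0" and d: "d \<in> Delta"
  have "(1 + a) * d \<in> Delta" by (rule D_lmult[OF one_plus_sq0[OF a] d])
  then have "(1 + a) * d - d \<in> Delta" using d D_diff by blast
  then show ?thesis by (simp add: algebra_simps)
qed

lemma D_rmult_sq0: "a * a = 0 \<Longrightarrow> d \<in> Delta \<Longrightarrow> (d * a :: 'a::ring_1) \<in> Delta"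
proof -
  assume a: "a * a = 0" and d: "d \<in> Delta"
  have "d * (1 + a) \<in> Delta" by (rule D_rmult[OF one_plus_sq0[OF a] d])
  then have "d * (1 + a) - d \<in> Delta" using d D_diff by blast
  then show ?thesis by (simp add: algebra_simps)
qed

lemma D_sq: "d \<in> Delta \<Longrightarrow> (d * d :: 'a::ring_1) \<in> Delta"
proof -
  assume d: "d \<in> Delta"
  have "(1 + d) * d \<in> Delta" by (rule D_lmult[OF D_one_plus[OF d] d])
  then have "(1 + d) * d - d \<in> Delta" using d D_diff by blast
  then show ?thesis by (simp add: algebra_simps)
qed

lemma D_idem: "g * g = g \<Longrightarrow> g \<in> Delta \<Longrightarrow> (g :: 'a::ring_1) = 0"
proof -
  assume gg: "g * g = g" and g: "g \<in> Delta"
  have "(1::'a) \<in> units_of_ring" by (auto simp: units_of_ring_def)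
  then have "- 1 \<in> (units_of_ring::'a set)" by (rule U_neg)
  then have "g + - 1 \<in> units_of_ring" using g unfolding Delta_def by blast
  then have "g - 1 \<in> units_of_ring" by simp
  then obtain v where v: "v * (g - 1) = 1" by (auto simp: units_of_ring_def)
  have "(g - 1) * g = 0" using gg by (simp add: algebra_simps)
  then have "v * ((g - 1) * g) = 0" by simp
  then show ?thesis using v by (simp add: mult.assoc[symmetric])
qed

lemma sq0_Delta:
  assumes DT: "DT_ring TYPE('a::ring_1)" and a: "(a::'a) * a = 0"
  shows "a \<in> Delta"
proof -
  obtain f d where fd: "a = f + d" "f \<in> Tr" "d \<in> Delta"
    using DT unfolding DT_ring_def by blast
  have f3: "f * (f * f) = f" using fd(2) by (simp add: Tr_def power3_eq_cube mult.assoc)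
  have ff: "f = a - d" using fd(1) by simp
  have "f * f = a * a - a * d - d * a + d * d" unfolding ff by (simp add: algebra_simps)
  also have "\<dots> = - (a * d) - d * a + d * d" using a by simp
  also have "\<dots> \<in> Delta"
    using D_lmult_sq0[OF a fd(3)] D_rmult_sq0[OF a fd(3)] D_sq[OF fd(3)]
    by (intro D_add D_diff D_neg)
  finally have "f * f \<in> Delta" .
  moreover have "(f * f) * (f * f) = f * f" using f3 by (simp add: mult.assoc)
  ultimately have "f * f = 0" using D_idem by blast
  then have "f = 0" using f3 by simp
  then show ?thesis using fd by simp
qed

lemma part1:
  assumes DT: "DT_ring TYPE('a::ring_1)" and e: "(e::'a) * e = e"
  shows "e * r - r * e \<in> Delta"
proof -
  have e1: "e * (1 - e) = 0" "(1 - e) * e = 0" using e by (simp_all add: algebra_simps)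
  have "(e * r * (1 - e)) * (e * r * (1 - e)) = e * r * ((1 - e) * e) * r * (1 - e)"
    by (simp add: mult.assoc)
  then have A: "e * r * (1 - e) \<in> Delta" using e1 sq0_Delta[OF DT] by simp
  have "((1 - e) * r * e) * ((1 - e) * r * e) = (1 - e) * r * (e * (1 - e)) * r * e"
    by (simp add: mult.assoc)
  then have B: "(1 - e) * r * e \<in> Delta" using e1 sq0_Delta[OF DT] by simp
  have "e * r - r * e = e * r * (1 - e) - (1 - e) * r * e"
    using e by (simp add: algebra_simps)
  then show ?thesis using D_diff[OF A B] by simp
qed

theorem lemma2p6:
  assumes "DT_ring TYPE('a::ring_1)"
  shows "(\<forall>e r :: 'a. e * e = e \<longrightarrow> e * r - r * e \<in> Delta)
       \<and> (\<forall>f d :: 'a. f \<in> Tr \<and> d \<in> Delta \<longrightarrow>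
             f * d + d * f \<in> Delta \<and> f * d - d * f \<in> Delta)"
proof (intro conjI allI impI)
  fix e r :: 'a assume "e * e = e" then show "e * r - r * e \<in> Delta" using part1[OF assms] by blast
next
  fix f d :: 'a assume H: "f \<in> Tr \<and> d \<in> Delta"
  then have d: "d \<in> Delta" by simp
  have f3: "f * (f * f) = f" using H by (simp add: Tr_def power3_eq_cube mult.assoc)
  define g where "g = f * f"
  have gg: "g * g = g" unfolding g_def using f3 by (simp add: mult.assoc)
  have fg: "f * g = f" "g * f = f" unfolding g_def using f3 by (simp_all add: mult.assoc)
  define w where "w = 1 - g + f"
  have ffg: "f * f = g" unfolding g_def ..
  have "w * w = 1" unfolding w_def using gg fg ffg by (simp add: algebra_simps)
  then have w: "w \<in> units_of_ring" by (auto simp: units_of_ring_def)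
  have wd: "w * d \<in> Delta" "d * w \<in> Delta" using D_lmult[OF w d] D_rmult[OF w d] by auto
  have c: "g * d - d * g \<in> Delta" using part1[OF assms gg] by blast
  have "(1 - (g + g)) * (1 - (g + g)) = 1" using gg by (simp add: algebra_simps)
  then have u2: "1 - (g + g) \<in> units_of_ring" by (auto simp: units_of_ring_def)
  have "d - (1 - (g + g)) * d \<in> Delta" using D_diff[OF d D_lmult[OF u2 d]] .
  moreover have "d - (1 - (g + g)) * d = g * d + g * d" by (simp add: algebra_simps)
  ultimately have g2: "g * d + g * d \<in> Delta" by simp
  have eqs: "g * d + d * g = (g * d + g * d) - (g * d - d * g)" by (simp add: algebra_simps)
  have s: "g * d + d * g \<in> Delta" unfolding eqs by (rule D_diff[OF g2 c])
  have eq1: "f * d + d * f = w * d + d * w - (d + d) + (g * d + d * g)"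
    unfolding w_def by (simp add: algebra_simps)
  show "f * d + d * f \<in> Delta" unfolding eq1
    by (rule D_add[OF D_diff[OF D_add[OF wd] D_add[OF d d]] s])
  have eq2: "f * d - d * f = w * d - d * w + (g * d - d * g)"
    unfolding w_def by (simp add: algebra_simps)
  show "f * d - d * f \<in> Delta" unfolding eq2 by (rule D_add[OF D_diff[OF wd] c])
qed

end
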